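(* Let $\mathcal{A}$ be a Banach algebra such that $\mathcal{A}^*$ factors on the left, i.e. $\mathcal{A}^*=\{a'a: a'\in\mathcal{A}^*,a\in\mathcal{A}\}$. Then $a\cdot a''\in Z_1(\mathcal{A}^{**})$ for all $a\in\mathcal{A}$, $a''\in\mathcal{A}^{**}$ if and only if $\mathcal{A}$ is Arens regular.
   Context: For $a,b\in\mathcal{A}$, $a'\in\mathcal{A}^*$, $a'',b''\in\mathcal{A}^{**}$: $\langle a'a,b\rangle=\langle a',ab\rangle$, $\langle b''a',a\rangle=\langle b'',a'a\rangle$, and the first Arens product is $\langle a''\cdot b'',a'\rangle=\langle a'',b''a'\rangle$. The second Arens product is given by $\langle a\circ a',b\rangle=\langle a',ba\rangle$, $\langle a'\circ a'',a\rangle=\langle a'',a\circ a'\rangle$, $\langle a''\circ b'',a'\rangle=\langle b'',a'\circ a''\rangle$. $Z_1(\mathcal{A}^{**})=\{a''\in\mathcal{A}^{**}: b''\mapsto a''\cdot b''\text{ is weak}^*\text{-to-weak}^*\text{ continuous}\}$. $\mathcal{A}$ is Arens regular if the two Arens products coincide on $\mathcal{A}^{**}$ (equivalently $Z_1(\mathcal{A}^{**})=\mathcal{A}^{**}$). *)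

theory Defs
  imports "HOL-Analysis.Analysis"
begin

text \<open>Banach algebra A: type 'a :: {real_normed_algebra, banach} (associative, not necessarily
unital). Dual A* = 'a \<Rightarrow>L real, bidual A** = ('a \<Rightarrow>L real) \<Rightarrow>L real.\<close>

type_synonym 'a dual = "'a \<Rightarrow>\<^sub>L real"
type_synonym 'a bidual = "('a \<Rightarrow>\<^sub>L real) \<Rightarrow>\<^sub>L real"

definition dual_ract :: "'a::real_normed_algebra dual \<Rightarrow> 'a \<Rightarrow> 'a dual"
  where "dual_ract f a = Blinfun (\<lambda>b. f (a * b))"

definition bidual_lact :: "'a::real_normed_algebra bidual \<Rightarrow> 'a dual \<Rightarrow> 'a dual"
  where "bidual_lact G f = Blinfun (\<lambda>a. G (dual_ract f a))"

definition arens1 :: "'a::real_normed_algebra bidual \<Rightarrow> 'a bidual \<Rightarrow> 'a bidual"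
  where "arens1 F G = Blinfun (\<lambda>f. F (bidual_lact G f))"

definition dual_lact :: "'a::real_normed_algebra \<Rightarrow> 'a dual \<Rightarrow> 'a dual"
  where "dual_lact a f = Blinfun (\<lambda>b. f (b * a))"

definition bidual_ract :: "'a::real_normed_algebra dual \<Rightarrow> 'a bidual \<Rightarrow> 'a dual"
  where "bidual_ract f F = Blinfun (\<lambda>a. F (dual_lact a f))"

definition arens2 :: "'a::real_normed_algebra bidual \<Rightarrow> 'a bidual \<Rightarrow> 'a bidual"
  where "arens2 F G = Blinfun (\<lambda>f. G (bidual_ract f F))"

definition canon :: "'a::real_normed_vector \<Rightarrow> 'a bidual"
  where "canon a = Blinfun (\<lambda>f::'a \<Rightarrow>\<^sub>L real. blinfun_apply f a)"

definition weak_star :: "('b::real_normed_vector \<Rightarrow>\<^sub>L real) topology"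
  where "weak_star = pullback_topology UNIV blinfun_apply
                        (product_topology (\<lambda>_. euclidean) UNIV)"

definition Z1 :: "'a::real_normed_algebra bidual set"
  where "Z1 = {F. continuous_map weak_star weak_star (\<lambda>G. arens1 F G)}"

definition arens_regular :: "'a::real_normed_algebra itself \<Rightarrow> bool"
  where "arens_regular _ \<longleftrightarrow> (\<forall>F G :: 'a bidual. arens1 F G = arens2 F G)"

definition dual_factors_left :: "'a::real_normed_algebra itself \<Rightarrow> bool"
  where "dual_factors_left _ \<longleftrightarrow> (\<forall>h :: 'a dual. \<exists>f a. h = dual_ract f a)"

end

theory Submission
  imports Defs
begin

lemma dual_ract_apply[simp]: "blinfun_apply (dual_ract f a) b = f (a * b)"
  unfolding dual_ract_def
  by (rule bounded_linear_Blinfun_apply[THEN fun_cong])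
     (intro bounded_linear_compose[OF blinfun.bounded_linear_right] bounded_linear_mult_right)

lemma dual_lact_apply[simp]: "blinfun_apply (dual_lact a f) b = f (b * a)"
  unfolding dual_lact_def
  by (rule bounded_linear_Blinfun_apply[THEN fun_cong])
     (intro bounded_linear_compose[OF blinfun.bounded_linear_right] bounded_linear_mult_left)

lemma norm_dual_ract: "norm (dual_ract f a) \<le> norm f * norm a"
proof (rule norm_blinfun_bound)
  show "0 \<le> norm f * norm a" by simp
  fix b
  have "norm (f (a*b)) \<le> norm f * norm (a*b)" by (rule norm_blinfun)
  also have "\<dots> \<le> norm f * (norm a * norm b)"
    by (intro mult_left_mono norm_mult_ineq) simp
  finally show "norm (blinfun_apply (dual_ract f a) b) \<le> norm f * norm a * norm b"
    by (simp add: mult.assoc)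
qed

lemma norm_dual_lact: "norm (dual_lact a f) \<le> norm f * norm a"
proof (rule norm_blinfun_bound)
  show "0 \<le> norm f * norm a" by simp
  fix b
  have "norm (f (b*a)) \<le> norm f * norm (b*a)" by (rule norm_blinfun)
  also have "\<dots> \<le> norm f * (norm b * norm a)"
    by (intro mult_left_mono norm_mult_ineq) simp
  finally show "norm (blinfun_apply (dual_lact a f) b) \<le> norm f * norm a * norm b"
    by (simp add: mult_ac)
qed

lemma bl_dual_ract_a: "bounded_linear (\<lambda>a. dual_ract f a)"
proof (rule bounded_linear_intro[where K="norm f"])
  show "dual_ract f (x + y) = dual_ract f x + dual_ract f y" for x y
    by (rule blinfun_eqI) (simp add: plus_blinfun.rep_eq algebra_simps blinfun.add_right blinfun.add_left)
  show "dual_ract f (r *\<^sub>R x) = r *\<^sub>R dual_ract f x" for r x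
    by (rule blinfun_eqI) (simp add: scaleR_blinfun.rep_eq blinfun.scaleR_right blinfun.scaleR_left)
  show "norm (dual_ract f x) \<le> norm x * norm f" for x
    using norm_dual_ract by (simp add: mult.commute)
qed

lemma bl_dual_ract_f: "bounded_linear (\<lambda>f. dual_ract f a)"
proof (rule bounded_linear_intro[where K="norm a"])
  show "(\<lambda>f. dual_ract f a) (x + y) = (\<lambda>f. dual_ract f a) x + (\<lambda>f. dual_ract f a) y" for x y
    by (rule blinfun_eqI) (simp add: plus_blinfun.rep_eq algebra_simps blinfun.add_right blinfun.add_left)
  show "(\<lambda>f. dual_ract f a) (r *\<^sub>R x) = r *\<^sub>R (\<lambda>f. dual_ract f a) x" for r x
    by (rule blinfun_eqI) (simp add: scaleR_blinfun.rep_eq blinfun.scaleR_right blinfun.scaleR_left)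
  show "norm ((\<lambda>f. dual_ract f a) x) \<le> norm x * norm a" for x
    using norm_dual_ract by (simp add: mult.commute)
qed

lemma bl_dual_lact_a: "bounded_linear (\<lambda>a. dual_lact a f)"
proof (rule bounded_linear_intro[where K="norm f"])
  show "(\<lambda>a. dual_lact a f) (x + y) = (\<lambda>a. dual_lact a f) x + (\<lambda>a. dual_lact a f) y" for x y
    by (rule blinfun_eqI) (simp add: plus_blinfun.rep_eq algebra_simps blinfun.add_right blinfun.add_left)
  show "(\<lambda>a. dual_lact a f) (r *\<^sub>R x) = r *\<^sub>R (\<lambda>a. dual_lact a f) x" for r x
    by (rule blinfun_eqI) (simp add: scaleR_blinfun.rep_eq blinfun.scaleR_right blinfun.scaleR_left)
  show "norm ((\<lambda>a. dual_lact a f) x) \<le> norm x * norm f" for x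
    using norm_dual_lact by (simp add: mult.commute)
qed

lemma bl_dual_lact_f: "bounded_linear (\<lambda>f. dual_lact a f)"
proof (rule bounded_linear_intro[where K="norm a"])
  show "dual_lact a (x + y) = dual_lact a x + dual_lact a y" for x y
    by (rule blinfun_eqI) (simp add: plus_blinfun.rep_eq algebra_simps blinfun.add_right blinfun.add_left)
  show "dual_lact a (r *\<^sub>R x) = r *\<^sub>R dual_lact a x" for r x
    by (rule blinfun_eqI) (simp add: scaleR_blinfun.rep_eq blinfun.scaleR_right blinfun.scaleR_left)
  show "norm (dual_lact a x) \<le> norm x * norm a" for x
    using norm_dual_lact by (simp add: mult.commute)
qed

lemma bidual_lact_apply[simp]: "blinfun_apply (bidual_lact G f) a = G (dual_ract f a)"
  unfolding bidual_lact_def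
  by (rule bounded_linear_Blinfun_apply[THEN fun_cong])
     (intro bounded_linear_compose[OF blinfun.bounded_linear_right] bl_dual_ract_a)

lemma bidual_ract_apply[simp]: "blinfun_apply (bidual_ract f F) a = F (dual_lact a f)"
  unfolding bidual_ract_def
  by (rule bounded_linear_Blinfun_apply[THEN fun_cong])
     (intro bounded_linear_compose[OF blinfun.bounded_linear_right] bl_dual_lact_a)

lemma norm_bidual_lact: "norm (bidual_lact G f) \<le> norm G * norm f"
proof (rule norm_blinfun_bound)
  show "0 \<le> norm G * norm f" by simp
  fix a
  have "norm (G (dual_ract f a)) \<le> norm G * norm (dual_ract f a)" by (rule norm_blinfun)
  also have "\<dots> \<le> norm G * (norm f * norm a)"
    by (intro mult_left_mono norm_dual_ract) simp
  finally show "norm (blinfun_apply (bidual_lact G f) a) \<le> norm G * norm f * norm a"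
    by (simp add: mult_ac)
qed

lemma norm_bidual_ract: "norm (bidual_ract f F) \<le> norm F * norm f"
proof (rule norm_blinfun_bound)
  show "0 \<le> norm F * norm f" by simp
  fix a
  have "norm (F (dual_lact a f)) \<le> norm F * norm (dual_lact a f)" by (rule norm_blinfun)
  also have "\<dots> \<le> norm F * (norm f * norm a)"
    by (intro mult_left_mono norm_dual_lact) simp
  finally show "norm (blinfun_apply (bidual_ract f F) a) \<le> norm F * norm f * norm a"
    by (simp add: mult_ac)
qed

lemma dual_ract_add: "dual_ract (x + y) a = dual_ract x a + dual_ract y a"
  by (rule blinfun_eqI) (simp add: plus_blinfun.rep_eq)
lemma dual_lact_add: "dual_lact a (x + y) = dual_lact a x + dual_lact a y"
  by (rule blinfun_eqI) (simp add: plus_blinfun.rep_eq)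
lemma dual_ract_scale: "dual_ract (r *\<^sub>R x) a = r *\<^sub>R dual_ract x a"
  by (rule blinfun_eqI) (simp add: scaleR_blinfun.rep_eq)
lemma dual_lact_scale: "dual_lact a (r *\<^sub>R x) = r *\<^sub>R dual_lact a x"
  by (rule blinfun_eqI) (simp add: scaleR_blinfun.rep_eq)

lemma bl_bidual_lact: "bounded_linear (\<lambda>f. bidual_lact G f)"
proof (rule bounded_linear_intro[where K="norm G"])
  show "bidual_lact G (x + y) = bidual_lact G x + bidual_lact G y" for x y
    by (rule blinfun_eqI) (simp add: plus_blinfun.rep_eq algebra_simps blinfun.add_right blinfun.add_left dual_ract_add dual_lact_add dual_ract_scale dual_lact_scale)
  show "bidual_lact G (r *\<^sub>R x) = r *\<^sub>R bidual_lact G x" for r x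
    by (rule blinfun_eqI) (simp add: scaleR_blinfun.rep_eq blinfun.scaleR_right blinfun.scaleR_left dual_ract_add dual_lact_add dual_ract_scale dual_lact_scale)
  show "norm (bidual_lact G x) \<le> norm x * norm G" for x
    using norm_bidual_lact by (simp add: mult.commute)
qed

lemma bl_bidual_ract: "bounded_linear (\<lambda>f. bidual_ract f F)"
proof (rule bounded_linear_intro[where K="norm F"])
  show "(\<lambda>f. bidual_ract f F) (x + y) = (\<lambda>f. bidual_ract f F) x + (\<lambda>f. bidual_ract f F) y" for x y
    by (rule blinfun_eqI) (simp add: plus_blinfun.rep_eq algebra_simps blinfun.add_right blinfun.add_left dual_ract_add dual_lact_add dual_ract_scale dual_lact_scale)
  show "(\<lambda>f. bidual_ract f F) (r *\<^sub>R x) = r *\<^sub>R (\<lambda>f. bidual_ract f F) x" for r x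
    by (rule blinfun_eqI) (simp add: scaleR_blinfun.rep_eq blinfun.scaleR_right blinfun.scaleR_left dual_ract_add dual_lact_add dual_ract_scale dual_lact_scale)
  show "norm ((\<lambda>f. bidual_ract f F) x) \<le> norm x * norm F" for x
    using norm_bidual_ract by (simp add: mult.commute)
qed

lemma arens1_apply[simp]: "blinfun_apply (arens1 F G) f = F (bidual_lact G f)"
  unfolding arens1_def
  by (rule bounded_linear_Blinfun_apply[THEN fun_cong])
     (intro bounded_linear_compose[OF blinfun.bounded_linear_right] bl_bidual_lact)

lemma arens2_apply[simp]: "blinfun_apply (arens2 F G) f = G (bidual_ract f F)"
  unfolding arens2_def
  by (rule bounded_linear_Blinfun_apply[THEN fun_cong])
     (intro bounded_linear_compose[OF blinfun.bounded_linear_right] bl_bidual_ract)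

lemma canon_apply[simp]: "blinfun_apply (canon a) f = f a"
  unfolding canon_def
  by (rule bounded_linear_Blinfun_apply[THEN fun_cong]) (rule blinfun.bounded_linear_left)

definition lin :: "('v::real_vector \<Rightarrow> real) \<Rightarrow> bool" where
  "lin g \<longleftrightarrow> (\<forall>x y. g (x + y) = g x + g y) \<and> (\<forall>r x. g (r *\<^sub>R x) = r * g x)"

lemma lin_diff: "lin g \<Longrightarrow> g (x - y) = g x - g y"
  unfolding lin_def by (metis add_diff_cancel diff_add_cancel eq_diff_eq)

lemma span_ker:
  fixes f :: "'i \<Rightarrow> 'v::real_vector \<Rightarrow> real"
  assumes "finite I" "lin g" "\<And>i. i \<in> I \<Longrightarrow> lin (f i)"
    "\<And>x. (\<forall>i\<in>I. f i x = 0) \<Longrightarrow> g x = 0"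
  shows "\<exists>c. \<forall>x. g x = (\<Sum>i\<in>I. c i * f i x)"
  using assms
proof (induction I arbitrary: g rule: finite_induct)
  case empty
  then show ?case by auto
next
  case (insert j I)
  show ?case
  proof (cases "\<forall>x. (\<forall>i\<in>I. f i x = 0) \<longrightarrow> f j x = 0")
    case True
    have "\<exists>c. \<forall>x. g x = (\<Sum>i\<in>I. c i * f i x)"
      using True insert.prems by (intro insert.IH) auto
    then obtain c where c: "\<forall>x. g x = (\<Sum>i\<in>I. c i * f i x)" by blast
    have "(\<Sum>i\<in>insert j I. (c(j:=0)) i * f i x) = (\<Sum>i\<in>I. c i * f i x)" for x
      using insert.hyps by (simp add: sum.insert) (intro sum.cong, auto)
    then show ?thesis using c by metis
  next
    case False
    then obtain x0 where x0: "\<forall>i\<in>I. f i x0 = 0" "f j x0 \<noteq> 0" by blast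
    define k where "k = g x0 / f j x0"
    define g' where "g' x = g x - k * f j x" for x
    have linj: "lin (f j)" using insert.prems by auto
    have "lin g'" using insert.prems(1) linj unfolding lin_def g'_def by (auto simp: algebra_simps)
    moreover have "g' x = 0" if "\<forall>i\<in>I. f i x = 0" for x
    proof -
      define y where "y = x - (f j x / f j x0) *\<^sub>R x0"
      have "\<forall>i\<in>insert j I. f i y = 0"
      proof
        fix i assume i: "i \<in> insert j I"
        then have "lin (f i)" using insert.prems by auto
        then have "f i y = f i x - (f j x / f j x0) * f i x0"
          unfolding y_def by (simp add: lin_diff) (simp add: lin_def)
        then show "f i y = 0" using i that x0 by auto
      qed
      then have "g y = 0" using insert.prems by auto
      moreover have "g y = g x - (f j x / f j x0) * g x0"
        unfolding y_def using insert.prems(1) by (simp add: lin_diff) (simp add: lin_def)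
      ultimately show ?thesis unfolding g'_def k_def by simp
    qed
    ultimately have "\<exists>c. \<forall>x. g' x = (\<Sum>i\<in>I. c i * f i x)"
      using insert.prems by (intro insert.IH) auto
    then obtain c where c: "\<forall>x. g' x = (\<Sum>i\<in>I. c i * f i x)" by blast
    have "(\<Sum>i\<in>insert j I. (c(j:=k)) i * f i x) = k * f j x + (\<Sum>i\<in>I. c i * f i x)" for x
      using insert.hyps by (simp add: sum.insert) (intro sum.cong, auto)
    then have "\<forall>x. g x = (\<Sum>i\<in>insert j I. (c(j:=k)) i * f i x)"
      using c unfolding g'_def by (metis add.commute diff_add_cancel)
    then show ?thesis by blast
  qed
qed

lemma topspace_weak_star[simp]: "topspace weak_star = UNIV"
  unfolding weak_star_def by (simp add: topspace_pullback_topology)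

lemma ws_eval: "continuous_map weak_star euclidean (\<lambda>G. blinfun_apply G f)"
proof -
  have "continuous_map weak_star euclidean ((\<lambda>p. p f) \<circ> blinfun_apply)"
    unfolding weak_star_def
    by (intro continuous_map_pullback continuous_map_product_projection) simp
  then show ?thesis by (simp add: o_def)
qed

lemma into_ws:
  assumes "\<And>f. continuous_map X euclidean (\<lambda>x. blinfun_apply (\<phi> x) f)"
  shows "continuous_map X weak_star \<phi>"
  unfolding weak_star_def
  by (rule continuous_map_pullback') (auto simp: continuous_map_componentwise_UNIV o_def assms)

lemma ws_kernel:
  fixes L :: "('b::real_normed_vector \<Rightarrow>\<^sub>L real) \<Rightarrow> real"
  assumes cont: "continuous_map weak_star euclidean L" and lL: "lin L"
  shows "\<exists>I. finite I \<and> (\<forall>G. (\<forall>f\<in>I. blinfun_apply G f = 0) \<longrightarrow> L G = 0)"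
proof -
  have "openin weak_star {G \<in> topspace weak_star. L G \<in> {-1<..<1}}"
    by (rule openin_continuous_map_preimage[OF cont]) simp
  then have "openin weak_star {G. L G \<in> {-1<..<1}}" by simp
  then obtain U where U: "openin (product_topology (\<lambda>_. euclidean) UNIV) U"
      and SU: "{G. L G \<in> {-1<..<1}} = blinfun_apply -` U"
    unfolding weak_star_def openin_pullback_topology by auto
  have L0: "L 0 = 0" using lL unfolding lin_def by (metis scaleR_zero_left mult_zero_left)
  then have "blinfun_apply 0 \<in> U" using SU by auto
  then obtain V where V: "finite {i. V i \<noteq> UNIV}" "blinfun_apply 0 \<in> Pi\<^sub>E UNIV V"
      "Pi\<^sub>E UNIV V \<subseteq> U"
    using U unfolding openin_product_topology_alt by force
  show ?thesis
  proof (intro exI conjI allI impI)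
    show "finite {i. V i \<noteq> UNIV}" by fact
    fix G :: "'b \<Rightarrow>\<^sub>L real"
    assume G: "\<forall>f\<in>{i. V i \<noteq> UNIV}. blinfun_apply G f = 0"
    have "blinfun_apply (t *\<^sub>R G) \<in> Pi\<^sub>E UNIV V" for t
    proof -
      have "blinfun_apply (t *\<^sub>R G) i \<in> V i" for i
      proof (cases "V i = UNIV")
        case False
        then have "blinfun_apply (t *\<^sub>R G) i = blinfun_apply 0 i" using G by (simp add: scaleR_blinfun.rep_eq)
        then show ?thesis using V(2) by (auto simp: PiE_iff)
      qed simp
      then show ?thesis by (auto simp: PiE_iff)
    qed
    then have "t *\<^sub>R G \<in> {G. L G \<in> {-1<..<1}}" for t using V(3) SU by blast
    then have "\<bar>L (t *\<^sub>R G)\<bar> < 1" for t by (simp add: abs_less_iff)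
    then have t: "\<bar>t * L G\<bar> < 1" for t using lL unfolding lin_def by simp
    show "L G = 0"
    proof (rule ccontr)
      assume "L G \<noteq> 0"
      then have "\<bar>(2 / L G) * L G\<bar> = 2" by simp
      then show False using t[of "2 / L G"] by simp
    qed
  qed
qed

lemma bidual_lact_canon: "bidual_lact (canon b) h = dual_lact b h"
  by (rule blinfun_eqI) simp

lemma Z1_agree:
  fixes K :: "'a::real_normed_algebra bidual"
  assumes "K \<in> Z1"
  shows "arens1 K G = arens2 K G"
proof (rule blinfun_eqI)
  fix h :: "'a dual"
  define L where "L = (\<lambda>G :: 'a bidual. K (bidual_lact G h))"
  have "continuous_map weak_star euclidean ((\<lambda>G. blinfun_apply G h) \<circ> arens1 K)"
    using assms unfolding Z1_def by (intro continuous_map_compose[OF _ ws_eval]) simp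
  then have cont: "continuous_map weak_star euclidean L" by (simp add: L_def o_def)
  have blG: "bidual_lact (G1 + G2) h = bidual_lact G1 h + bidual_lact G2 h"
     "bidual_lact (r *\<^sub>R G1) h = r *\<^sub>R bidual_lact G1 h" for G1 G2 :: "'a bidual" and r
    by (rule blinfun_eqI; simp add: plus_blinfun.rep_eq scaleR_blinfun.rep_eq)+
  have lL: "lin L" unfolding lin_def L_def by (simp add: blG blinfun.add_right blinfun.scaleR_right)
  obtain I where I: "finite I" "\<forall>G. (\<forall>f\<in>I. blinfun_apply G f = 0) \<longrightarrow> L G = 0"
    using ws_kernel[OF cont lL] by blast
  have "\<exists>c. \<forall>G. L G = (\<Sum>i\<in>I. c i * (\<lambda>i G. blinfun_apply G i) i G)"
    by (rule span_ker[OF I(1) lL]) (use I(2) in \<open>auto simp: lin_def plus_blinfun.rep_eq scaleR_blinfun.rep_eq\<close>)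
  then obtain c where c: "\<forall>G. L G = (\<Sum>i\<in>I. c i * blinfun_apply G i)" by auto
  define \<phi> where "\<phi> = (\<Sum>i\<in>I. c i *\<^sub>R i)"
  have LG: "L G = G \<phi>" for G
    using c by (simp add: \<phi>_def blinfun.sum_right blinfun.scaleR_right)
  have "\<phi> = bidual_ract h K"
  proof (rule blinfun_eqI)
    fix b
    have "L (canon b) = canon b \<phi>" by (rule LG)
    then show "\<phi> b = bidual_ract h K b" by (simp add: L_def bidual_lact_canon)
  qed
  then show "arens1 K G h = arens2 K G h" using LG[of G] by (simp add: L_def)
qed


lemma lemA: "bidual_lact G (dual_ract h a) = dual_ract (bidual_lact G h) a"
proof -
  have "dual_ract (dual_ract h a) b = dual_ract h (a * b)" for b
    by (rule blinfun_eqI) (simp add: mult.assoc)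
  then show ?thesis by (intro blinfun_eqI) simp
qed

lemma lemB: "bidual_ract h (arens1 (canon a) F) = bidual_ract (dual_ract h a) F"
proof -
  have "dual_ract (dual_lact b h) a = dual_lact b (dual_ract h a)" for b
    by (rule blinfun_eqI) (simp add: mult.assoc)
  then show ?thesis by (intro blinfun_eqI) simp
qed

lemma arens2_Z1: "continuous_map weak_star weak_star (\<lambda>G. arens2 K G)"
  by (rule into_ws) (simp add: ws_eval)

theorem corollary2p3:
  assumes "dual_factors_left TYPE('a::{real_normed_algebra, banach})"
  shows "(\<forall>(a::'a) (F::'a bidual). arens1 (canon a) F \<in> Z1) \<longleftrightarrow> arens_regular TYPE('a)"
proof
  assume H: "\<forall>(a::'a) (F::'a bidual). arens1 (canon a) F \<in> Z1"
  show "arens_regular TYPE('a)"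
    unfolding arens_regular_def
  proof (intro allI blinfun_eqI)
    fix F G :: "'a bidual" and h :: "'a dual"
    obtain h' a where h: "h = dual_ract h' a"
      using assms unfolding dual_factors_left_def by blast
    have "arens1 F G h = arens1 (arens1 (canon a) F) G h'"
      by (simp add: h lemA)
    also have "\<dots> = arens2 (arens1 (canon a) F) G h'"
      using Z1_agree H by metis
    also have "\<dots> = arens2 F G h"
      by (simp add: h lemB)
    finally show "arens1 F G h = arens2 F G h" .
  qed
next
  assume R: "arens_regular TYPE('a)"
  show "\<forall>(a::'a) (F::'a bidual). arens1 (canon a) F \<in> Z1"
  proof (intro allI)
    fix a :: 'a and F :: "'a bidual"
    have "(\<lambda>G. arens1 (arens1 (canon a) F) G) = (\<lambda>G. arens2 (arens1 (canon a) F) G)"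
      using R unfolding arens_regular_def by blast
    then show "arens1 (canon a) F \<in> Z1" unfolding Z1_def using arens2_Z1 by simp
  qed
qed

end
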